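(* Let $\mathbf{IL}\mathsf X$ be a Horn logic and let $T$ be an $\mathbf{IL}\mathsf X$-satisfiable $\mathbf{IL}\mathsf X$-tableau (for some finite set $\Gamma$ of formulas). Then for any tableau rule, the tableau $T'$ obtained from $T$ by an application of that rule is also $\mathbf{IL}\mathsf X$-satisfiable.
   Context: Formulas: built from a countable set $\mathsf{Prop}$ of propositional variables by $\neg$, $\to$, unary $\Box$ and binary $\rhd$. $\mathbf{IL}$ is the modal logic with axioms all instances of propositional tautologies and the schemes $\Box(A\to B)\to(\Box A\to\Box B)$, $\Box(\Box A\to A)\to\Box A$, $\Box(A\to B)\to A\rhd B$, $(A\rhd B)\wedge(B\rhd C)\to A\rhd C$, $(A\rhd C)\wedge(B\rhd C)\to A\vee B\rhd C$, $A\rhd B\to(\Diamond A\to\Diamond B)$, $\Diamond A\rhd A$ ($\Diamond=\neg\Box\neg$), rules modus ponens and necessitation. An $\mathbf{IL}$-frame is $\langle W,R,S\rangle$ with $W\neq\emptyset$, $R$ transitive and Noetherian (no infinite chains $x_0Rx_1Rx_2\cdots$), $S$ ternary, $yS_xz$ meaning $(x,y,z)\in S$, each $S_x$ a reflexive transitive relation on $\{y:xRy\}$, and $xRyRz\Rightarrow yS_xz$. A model adds a valuation $V$; forcing is standard for $\neg,\to$; $x\Vdash\Box A$ iff all $R$-successors force $A$; $x\Vdash A\rhd B$ iff for every $y$ with $xRy$ and $y\Vdash A$ there is $z$ with $yS_xz$, $z\Vdash B$; and for $w\in W$, $y\Vdash\Box_wA$ iff every $z$ with $yS_wz$ forces $A$.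 $\mathbf{IL}\mathsf X$ is $\mathbf{IL}$ plus axiom schemes $\mathsf X$; it is Horn if there is a set $\mathcal C_{\mathsf X}$ of strict universal Horn sentences $\forall\cdots\forall(\varphi_1\wedge\dots\wedge\varphi_n\to\psi)$ ($n\ge0$, atomic $\varphi_i,\psi$) in the language $\{R,S\}$ such that an $\mathbf{IL}$-frame validates all theorems of $\mathbf{IL}\mathsf X$ iff it satisfies $\mathcal C_{\mathsf X}$; $\mathbf{IL}\mathsf X$-frames/models are those satisfying $\mathcal C_{\mathsf X}$. Labels: $0$; $\sigma Rn$ for a label $\sigma$, $n\in\mathbb N$; $\sigma S_\rho n$ for labels $\sigma,\rho$ with $\rho$ a strict non-empty prefix of $\sigma$. Extended formulas also allow unary operators $\Box_\rho$, $\rho$ a label. Labelled formula: $\sigma::A$. For a set $\Lambda$ of labels, $\mathbf R^\Lambda,\mathbf S^\Lambda$ are the least relations on $\Lambda$ with: (1) $\sigma,\sigma Rn\in\Lambda\Rightarrow\sigma\mathbf R\,\sigma Rn$; (2) $\mathbf R$ transitive; (3) $\sigma,\rho,\sigma S_\rho n\in\Lambda\Rightarrow\sigma\mathbf S_\rho\,\sigma S_\rho n$; (4) $\sigma\mathbf R\tau\Rightarrow\tau\mathbf S_\sigma\tau$; (5) $\rho\mathbf R\sigma\mathbf R\tau\Rightarrow\sigma\mathbf S_\rho\tau$; (6) $\sigma\mathbf S_\rho\tau\mathbf S_\rho\upsilon\Rightarrow\sigma\mathbf S_\rho\upsilon$; (7) $\sigma\mathbf S_\rho\tau\Rightarrow\rho\mathbf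 R\sigma,\rho\mathbf R\tau$; (8) $\langle\Lambda,\mathbf R^\Lambda,\mathbf S^\Lambda\rangle\models\mathcal C_{\mathsf X}$ (where $\sigma\mathbf S_\rho\tau$ means $(\rho,\sigma,\tau)\in\mathbf S^\Lambda$). Tableau rules w.r.t. $\Lambda$ (antecedent $\Rightarrow$ succedents; "$\mid$" = branching): $\sigma::\neg\neg A\Rightarrow\sigma::A$; $\sigma::A\to B\Rightarrow\sigma::\neg A\mid\sigma::B$; $\sigma::\neg(A\to B)\Rightarrow\sigma::A,\sigma::\neg B$; $\sigma::\Box A\Rightarrow\tau::A$ when $\sigma\mathbf R\tau$; $\sigma::\Box_\rho A\Rightarrow\tau::A$ when $\sigma\mathbf S_\rho\tau$; $\sigma::A\rhd B\Rightarrow\tau::\neg A\mid\tau::\neg\Box_\sigma\neg B$ when $\sigma\mathbf R\tau$; $\sigma::\neg\Box A\Rightarrow\sigma Rn::\neg A,\sigma Rn::\Box A$ with $\sigma Rn\notin\Lambda$; $\sigma::\neg\Box_\rho A\Rightarrow\sigma S_\rho n::\neg A,\sigma S_\rho n::\Box A$ with $\sigma S_\rho n\notin\Lambda$; $\sigma::\neg(A\rhd B)\Rightarrow\sigma Rn::A,\sigma Rn::\Box_\sigma\neg B,\sigma Rn::\Box\neg A$ with $\sigma Rn\notin\Lambda$. $\mathbf{IL}\mathsf X$-tableau for finite $\Gamma$ (downward growing binary tree of labelled formulas), inductively: a single node $0::A$ with $A\in\Gamma$; extending any branch by $0::A$, $A\in\Gamma$; if $\mathcal B$ is a branch and some $\sigma::A$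 on $\mathcal B$ is the antecedent of an instance of a rule w.r.t. $\mathrm{lab}(\mathcal B)$ (labels occurring on $\mathcal B$), extending $\mathcal B$ by the succedents (with branching). Satisfiability: a set $\mathcal X$ of labelled formulas is $\mathbf{IL}\mathsf X$-satisfiable if there are an $\mathbf{IL}\mathsf X$-model $M=\langle W,R,S,V\rangle$ and a map $I:\mathrm{lab}(\mathcal X)\to W$ such that (i) $\sigma\mathbf R\tau\Rightarrow I(\sigma)RI(\tau)$; (ii) $\sigma\mathbf S_\rho\tau\Rightarrow I(\sigma)S_{I(\rho)}I(\tau)$ (relations $\mathbf R^{\mathrm{lab}(\mathcal X)},\mathbf S^{\mathrm{lab}(\mathcal X)}$); (iii) $M,I(\sigma)\Vdash A$ for all $\sigma::A\in\mathcal X$, with $\Box_\rho$ interpreted as $\Box_{I(\rho)}$. A tableau is $\mathbf{IL}\mathsf X$-satisfiable if some branch of it is. *)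

theory Defs
  imports Main
begin

text \<open>Labels: 0 is Root; RChild s n is s R n; SChild s r n is s S_r n.\<close>
datatype label = Root | RChild label nat | SChild label label nat

fun strict_prefix :: "label \<Rightarrow> label \<Rightarrow> bool" where
  "strict_prefix r Root = False"
| "strict_prefix r (RChild s n) = (r = s \<or> strict_prefix r s)"
| "strict_prefix r (SChild s q n) = (r = s \<or> strict_prefix r s)"

fun is_label :: "label \<Rightarrow> bool" where
  "is_label Root = True"
| "is_label (RChild s n) = is_label s"
| "is_label (SChild s r n) = (is_label s \<and> is_label r \<and> strict_prefix r s)"

datatype fm = Var nat | Neg fm | Imp fm fm | Box fm | Rhd fm fm

datatype efm = EVar nat | ENeg efm | EImp efm efm | EBox efm | ERhd efm efm
  | EBoxL label efm

fun emb :: "fm \<Rightarrow> efm" where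
  "emb (Var p) = EVar p"
| "emb (Neg A) = ENeg (emb A)"
| "emb (Imp A B) = EImp (emb A) (emb B)"
| "emb (Box A) = EBox (emb A)"
| "emb (Rhd A B) = ERhd (emb A) (emb B)"

definition And :: "fm \<Rightarrow> fm \<Rightarrow> fm" where "And A B = Neg (Imp A (Neg B))"
definition Or :: "fm \<Rightarrow> fm \<Rightarrow> fm" where "Or A B = Imp (Neg A) B"
definition Dia :: "fm \<Rightarrow> fm" where "Dia A = Neg (Box (Neg A))"

text \<open>Boolean evaluation treating Var, Box, Rhd formulas as atoms; a formula is an
  instance of a propositional tautology iff it is true under every such evaluation.\<close>
fun beval :: "(fm \<Rightarrow> bool) \<Rightarrow> fm \<Rightarrow> bool" where
  "beval f (Neg A) = (\<not> beval f A)"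
| "beval f (Imp A B) = (beval f A \<longrightarrow> beval f B)"
| "beval f (Var p) = f (Var p)"
| "beval f (Box A) = f (Box A)"
| "beval f (Rhd A B) = f (Rhd A B)"

definition taut_instance :: "fm \<Rightarrow> bool" where
  "taut_instance A \<longleftrightarrow> (\<forall>f. beval f A)"

fun subst :: "(nat \<Rightarrow> fm) \<Rightarrow> fm \<Rightarrow> fm" where
  "subst s (Var p) = s p"
| "subst s (Neg A) = Neg (subst s A)"
| "subst s (Imp A B) = Imp (subst s A) (subst s B)"
| "subst s (Box A) = Box (subst s A)"
| "subst s (Rhd A B) = Rhd (subst s A) (subst s B)"

text \<open>Theorems of IL X, where X is a set of axiom schemes (all substitution
  instances of members of X are axioms).\<close>
inductive ILX_thm :: "fm set \<Rightarrow> fm \<Rightarrow> bool" for X :: "fm set" where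
  taut: "taut_instance A \<Longrightarrow> ILX_thm X A"
| K: "ILX_thm X (Imp (Box (Imp A B)) (Imp (Box A) (Box B)))"
| L: "ILX_thm X (Imp (Box (Imp (Box A) A)) (Box A))"
| J1: "ILX_thm X (Imp (Box (Imp A B)) (Rhd A B))"
| J2: "ILX_thm X (Imp (And (Rhd A B) (Rhd B D)) (Rhd A D))"
| J3: "ILX_thm X (Imp (And (Rhd A D) (Rhd B D)) (Rhd (Or A B) D))"
| J4: "ILX_thm X (Imp (Rhd A B) (Imp (Dia A) (Dia B)))"
| J5: "ILX_thm X (Rhd (Dia A) A)"
| Xax: "A \<in> X \<Longrightarrow> ILX_thm X (subst s A)"
| MP: "ILX_thm X (Imp A B) \<Longrightarrow> ILX_thm X A \<Longrightarrow> ILX_thm X B"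
| Nec: "ILX_thm X A \<Longrightarrow> ILX_thm X (Box A)"

text \<open>A frame is given by W, R and S where S x y z means y S_x z.\<close>
definition IL_frame :: "'w set \<Rightarrow> ('w \<Rightarrow> 'w \<Rightarrow> bool) \<Rightarrow> ('w \<Rightarrow> 'w \<Rightarrow> 'w \<Rightarrow> bool) \<Rightarrow> bool" where
  "IL_frame W R S \<longleftrightarrow>
     W \<noteq> {}
   \<and> (\<forall>x y. R x y \<longrightarrow> x \<in> W \<and> y \<in> W)
   \<and> (\<forall>x y z. R x y \<longrightarrow> R y z \<longrightarrow> R x z)
   \<and> \<not> (\<exists>f :: nat \<Rightarrow> 'w. \<forall>i. R (f i) (f (Suc i)))
   \<and> (\<forall>x y z. S x y z \<longrightarrow> R x y \<and> R x z)
   \<and> (\<forall>x y. R x y \<longrightarrow> S x y y)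
   \<and> (\<forall>x y z u. S x y z \<longrightarrow> S x z u \<longrightarrow> S x y u)
   \<and> (\<forall>x y z. R x y \<longrightarrow> R y z \<longrightarrow> S x y z)"

text \<open>Forcing; V is the valuation, I interprets the labels occurring in Box_r.\<close>
fun forces :: "('w \<Rightarrow> 'w \<Rightarrow> bool) \<Rightarrow> ('w \<Rightarrow> 'w \<Rightarrow> 'w \<Rightarrow> bool) \<Rightarrow> ('w \<Rightarrow> nat \<Rightarrow> bool)
    \<Rightarrow> (label \<Rightarrow> 'w) \<Rightarrow> 'w \<Rightarrow> efm \<Rightarrow> bool" where
  "forces R S V I x (EVar p) = V x p"
| "forces R S V I x (ENeg A) = (\<not> forces R S V I x A)"
| "forces R S V I x (EImp A B) = (forces R S V I x A \<longrightarrow> forces R S V I x B)"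
| "forces R S V I x (EBox A) = (\<forall>y. R x y \<longrightarrow> forces R S V I y A)"
| "forces R S V I x (ERhd A B) =
     (\<forall>y. R x y \<longrightarrow> forces R S V I y A \<longrightarrow> (\<exists>z. S x y z \<and> forces R S V I z B))"
| "forces R S V I y (EBoxL r A) = (\<forall>z. S (I r) y z \<longrightarrow> forces R S V I z A)"

definition frame_valid :: "'w set \<Rightarrow> ('w \<Rightarrow> 'w \<Rightarrow> bool) \<Rightarrow> ('w \<Rightarrow> 'w \<Rightarrow> 'w \<Rightarrow> bool) \<Rightarrow> fm \<Rightarrow> bool" where
  "frame_valid W R S A \<longleftrightarrow> (\<forall>V I. \<forall>x\<in>W. forces R S V I x (emb A))"

text \<open>Atoms over variables x_i: AR i j is x_i R x_j; AS i j k is x_j S_{x_i} x_k.\<close>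
datatype atom = AR nat nat | AS nat nat nat

text \<open>A strict universal Horn sentence: body atoms (conjunction) and head atom,
  all variables universally quantified.\<close>
type_synonym horn_clause = "atom list \<times> atom"

fun atom_holds :: "('a \<Rightarrow> 'a \<Rightarrow> bool) \<Rightarrow> ('a \<Rightarrow> 'a \<Rightarrow> 'a \<Rightarrow> bool) \<Rightarrow> (nat \<Rightarrow> 'a) \<Rightarrow> atom \<Rightarrow> bool" where
  "atom_holds R S v (AR i j) = R (v i) (v j)"
| "atom_holds R S v (AS i j k) = S (v i) (v j) (v k)"

definition horn_sat :: "'a set \<Rightarrow> ('a \<Rightarrow> 'a \<Rightarrow> bool) \<Rightarrow> ('a \<Rightarrow> 'a \<Rightarrow> 'a \<Rightarrow> bool) \<Rightarrow> horn_clause set \<Rightarrow> bool" where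
  "horn_sat D R S C \<longleftrightarrow>
     (\<forall>(body, hd) \<in> C. \<forall>v. (\<forall>i. v i \<in> D) \<longrightarrow>
        (\<forall>a \<in> set body. atom_holds R S v a) \<longrightarrow> atom_holds R S v hd)"

text \<open>C witnesses that IL X is Horn (with respect to frames over the world type 'w).\<close>
definition horn_witness :: "'w itself \<Rightarrow> fm set \<Rightarrow> horn_clause set \<Rightarrow> bool" where
  "horn_witness _ X C \<longleftrightarrow>
     (\<forall>(W :: 'w set) R S. IL_frame W R S \<longrightarrow>
        ((\<forall>A. ILX_thm X A \<longrightarrow> frame_valid W R S A) \<longleftrightarrow> horn_sat W R S C))"

definition ILX_model :: "horn_clause set \<Rightarrow> 'w set \<Rightarrow> ('w \<Rightarrow> 'w \<Rightarrow> bool)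
    \<Rightarrow> ('w \<Rightarrow> 'w \<Rightarrow> 'w \<Rightarrow> bool) \<Rightarrow> ('w \<Rightarrow> nat \<Rightarrow> bool) \<Rightarrow> bool" where
  "ILX_model C W R S V \<longleftrightarrow> IL_frame W R S \<and> horn_sat W R S C"

text \<open>R' s t means s R t; S' r s t means s S_r t. Conditions (1)-(8).\<close>
definition lab_closed :: "label set \<Rightarrow> horn_clause set \<Rightarrow> (label \<Rightarrow> label \<Rightarrow> bool)
    \<Rightarrow> (label \<Rightarrow> label \<Rightarrow> label \<Rightarrow> bool) \<Rightarrow> bool" where
  "lab_closed \<Lambda> C R' S' \<longleftrightarrow>
     (\<forall>s n. s \<in> \<Lambda> \<longrightarrow> RChild s n \<in> \<Lambda> \<longrightarrow> R' s (RChild s n))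
   \<and> (\<forall>s t u. R' s t \<longrightarrow> R' t u \<longrightarrow> R' s u)
   \<and> (\<forall>s r n. s \<in> \<Lambda> \<longrightarrow> r \<in> \<Lambda> \<longrightarrow> SChild s r n \<in> \<Lambda> \<longrightarrow> S' r s (SChild s r n))
   \<and> (\<forall>s t. R' s t \<longrightarrow> S' s t t)
   \<and> (\<forall>r s t. R' r s \<longrightarrow> R' s t \<longrightarrow> S' r s t)
   \<and> (\<forall>r s t u. S' r s t \<longrightarrow> S' r t u \<longrightarrow> S' r s u)
   \<and> (\<forall>r s t. S' r s t \<longrightarrow> R' r s \<and> R' r t)
   \<and> horn_sat \<Lambda> R' S' C"

text \<open>The least such relations (intersection of all closed pairs).\<close>
definition LR :: "label set \<Rightarrow> horn_clause set \<Rightarrow> label \<Rightarrow> label \<Rightarrow> bool" where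
  "LR \<Lambda> C s t \<longleftrightarrow> (\<forall>R' S'. lab_closed \<Lambda> C R' S' \<longrightarrow> R' s t)"

definition LS :: "label set \<Rightarrow> horn_clause set \<Rightarrow> label \<Rightarrow> label \<Rightarrow> label \<Rightarrow> bool" where
  "LS \<Lambda> C r s t \<longleftrightarrow> (\<forall>R' S'. lab_closed \<Lambda> C R' S' \<longrightarrow> S' r s t)"

type_synonym lfm = "label \<times> efm"

definition lab :: "lfm set \<Rightarrow> label set" where "lab X = fst ` X"

text \<open>rule_inst C \<Lambda> a alts: the labelled formula a is the antecedent of an instance
  of a tableau rule w.r.t. \<Lambda>, whose succedents are alts (a list of alternatives;
  two alternatives means branching).\<close>
inductive rule_inst :: "horn_clause set \<Rightarrow> label set \<Rightarrow> lfm \<Rightarrow> lfm list list \<Rightarrow> bool"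
  for C :: "horn_clause set" and \<Lambda> :: "label set" where
  dneg: "rule_inst C \<Lambda> (s, ENeg (ENeg A)) [[(s, A)]]"
| imp: "rule_inst C \<Lambda> (s, EImp A B) [[(s, ENeg A)], [(s, B)]]"
| nimp: "rule_inst C \<Lambda> (s, ENeg (EImp A B)) [[(s, A), (s, ENeg B)]]"
| box: "LR \<Lambda> C s t \<Longrightarrow> rule_inst C \<Lambda> (s, EBox A) [[(t, A)]]"
| boxl: "LS \<Lambda> C r s t \<Longrightarrow> rule_inst C \<Lambda> (s, EBoxL r A) [[(t, A)]]"
| rhd: "LR \<Lambda> C s t \<Longrightarrow>
     rule_inst C \<Lambda> (s, ERhd A B) [[(t, ENeg A)], [(t, ENeg (EBoxL s (ENeg B)))]]"
| nbox: "RChild s n \<notin> \<Lambda> \<Longrightarrow>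
     rule_inst C \<Lambda> (s, ENeg (EBox A)) [[(RChild s n, ENeg A), (RChild s n, EBox A)]]"
| nboxl: "is_label (SChild s r n) \<Longrightarrow> SChild s r n \<notin> \<Lambda> \<Longrightarrow>
     rule_inst C \<Lambda> (s, ENeg (EBoxL r A))
       [[(SChild s r n, ENeg A), (SChild s r n, EBox A)]]"
| nrhd: "RChild s n \<notin> \<Lambda> \<Longrightarrow>
     rule_inst C \<Lambda> (s, ENeg (ERhd A B))
       [[(RChild s n, A), (RChild s n, EBoxL s (ENeg B)), (RChild s n, EBox (ENeg A))]]"

text \<open>A tableau is represented by the list of its branches (each branch is the list of
  labelled formulas from the root to a leaf).\<close>
type_synonym tableau = "lfm list list"

definition rule_step :: "horn_clause set \<Rightarrow> tableau \<Rightarrow> tableau \<Rightarrow> bool" where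
  "rule_step C T T' \<longleftrightarrow>
     (\<exists>T1 B T2 a alts. T = T1 @ [B] @ T2 \<and> a \<in> set B
        \<and> rule_inst C (lab (set B)) a alts
        \<and> T' = T1 @ map (\<lambda>alt. B @ alt) alts @ T2)"

inductive is_tableau :: "horn_clause set \<Rightarrow> fm set \<Rightarrow> tableau \<Rightarrow> bool"
  for C :: "horn_clause set" and \<Gamma> :: "fm set" where
  init: "A \<in> \<Gamma> \<Longrightarrow> is_tableau C \<Gamma> [[(Root, emb A)]]"
| add: "is_tableau C \<Gamma> (T1 @ [B] @ T2) \<Longrightarrow> A \<in> \<Gamma> \<Longrightarrow>
     is_tableau C \<Gamma> (T1 @ [B @ [(Root, emb A)]] @ T2)"
| rule: "is_tableau C \<Gamma> T \<Longrightarrow> rule_step C T T' \<Longrightarrow> is_tableau C \<Gamma> T'"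

definition lsat :: "'w itself \<Rightarrow> horn_clause set \<Rightarrow> lfm set \<Rightarrow> bool" where
  "lsat _ C X \<longleftrightarrow>
     (\<exists>(W :: 'w set) R S V (I :: label \<Rightarrow> 'w).
        ILX_model C W R S V
      \<and> (\<forall>s \<in> lab X. I s \<in> W)
      \<and> (\<forall>s t. LR (lab X) C s t \<longrightarrow> R (I s) (I t))
      \<and> (\<forall>r s t. LS (lab X) C r s t \<longrightarrow> S (I r) (I s) (I t))
      \<and> (\<forall>(s, A) \<in> X. forces R S V I (I s) A))"

definition tableau_sat :: "'w itself \<Rightarrow> horn_clause set \<Rightarrow> tableau \<Rightarrow> bool" where
  "tableau_sat w C T \<longleftrightarrow> (\<exists>B \<in> set T. lsat w C (set B))"

end

theory Submission
  imports Defs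
begin

fun flabs :: "efm \<Rightarrow> label set" where
  "flabs (EVar p) = {}"
| "flabs (ENeg A) = flabs A"
| "flabs (EImp A B) = flabs A \<union> flabs B"
| "flabs (EBox A) = flabs A"
| "flabs (ERhd A B) = flabs A \<union> flabs B"
| "flabs (EBoxL r A) = insert r (flabs A)"

lemma flabs_emb[simp]: "flabs (emb A) = {}"
  by (induction A) auto

definition binv :: "lfm list \<Rightarrow> bool" where
  "binv B \<longleftrightarrow> (\<forall>x\<in>lab (set B). is_label x \<and> (\<forall>r. strict_prefix r x \<longrightarrow> r \<in> lab (set B)))
     \<and> (\<forall>p\<in>set B. flabs (snd p) \<subseteq> lab (set B))"

lemma lab_app[simp]: "lab (X \<union> Y) = lab X \<union> lab Y"
  by (simp add: lab_def image_Un)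

lemma forces_cong:
  "\<forall>r\<in>flabs A. I r = I' r \<Longrightarrow> forces R S V I x A = forces R S V I' x A"
  by (induction A arbitrary: x) auto

lemma atom_full:
  "(\<forall>i. v i \<in> L) \<Longrightarrow> atom_holds (\<lambda>a b. a \<in> L \<and> b \<in> L) (\<lambda>r a b. r \<in> L \<and> a \<in> L \<and> b \<in> L) v t"
  by (cases t) auto

lemma full_closed:
  "lab_closed L C (\<lambda>a b. a \<in> L \<and> b \<in> L) (\<lambda>r a b. r \<in> L \<and> a \<in> L \<and> b \<in> L)"
  unfolding lab_closed_def
proof (intro conjI)
  show "horn_sat L (\<lambda>a b. a \<in> L \<and> b \<in> L) (\<lambda>r a b. r \<in> L \<and> a \<in> L \<and> b \<in> L) C"
    unfolding horn_sat_def using atom_full by blast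
qed auto

lemma LR_in: "LR L C s t \<Longrightarrow> s \<in> L \<and> t \<in> L"
  using full_closed unfolding LR_def by fastforce

lemma LS_in: "LS L C r s t \<Longrightarrow> r \<in> L \<and> s \<in> L \<and> t \<in> L"
  using full_closed unfolding LS_def by fastforce

lemma LR_child: "s \<in> L \<Longrightarrow> RChild s n \<in> L \<Longrightarrow> LR L C s (RChild s n)"
  unfolding LR_def lab_closed_def by blast

lemma LS_child: "s \<in> L \<Longrightarrow> r \<in> L \<Longrightarrow> SChild s r n \<in> L \<Longrightarrow> LS L C r s (SChild s r n)"
  unfolding LS_def lab_closed_def by blast

lemma atom_pull:
  "(\<forall>i. v i \<in> L) \<Longrightarrow>
   atom_holds (\<lambda>a b. a \<in> L \<and> b \<in> L \<and> R (I a) (I b))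
     (\<lambda>r a b. r \<in> L \<and> a \<in> L \<and> b \<in> L \<and> S (I r) (I a) (I b)) v t
   = atom_holds R S (I \<circ> v) t"
  by (cases t) auto

lemma closure:
  assumes fr: "IL_frame W R S" and hs: "horn_sat W R S C" and IW: "\<forall>x\<in>L. I x \<in> W"
    and a: "\<forall>u m. u \<in> L \<longrightarrow> RChild u m \<in> L \<longrightarrow> R (I u) (I (RChild u m))"
    and b: "\<forall>u r m. u \<in> L \<longrightarrow> r \<in> L \<longrightarrow> SChild u r m \<in> L \<longrightarrow> S (I r) (I u) (I (SChild u r m))"
  shows "(\<forall>s t. LR L C s t \<longrightarrow> R (I s) (I t)) \<and> (\<forall>r s t. LS L C r s t \<longrightarrow> S (I r) (I s) (I t))"
proof -
  define R' where "R' = (\<lambda>a b. a \<in> L \<and> b \<in> L \<and> R (I a) (I b))"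
  define S' where "S' = (\<lambda>r a b. r \<in> L \<and> a \<in> L \<and> b \<in> L \<and> S (I r) (I a) (I b))"
  have hs': "horn_sat L R' S' C"
    unfolding horn_sat_def
  proof (clarify)
    fix body hd v
    assume bh: "(body, hd) \<in> C" and vL: "\<forall>i. v i \<in> L" and bd: "\<forall>a\<in>set body. atom_holds R' S' v a"
    have eq: "\<And>t. atom_holds R' S' v t = atom_holds R S (I \<circ> v) t"
      unfolding R'_def S'_def by (rule atom_pull[OF vL])
    have 1: "\<forall>a\<in>set body. atom_holds R S (I \<circ> v) a" using bd eq by simp
    have 2: "\<forall>i. (I \<circ> v) i \<in> W" using IW vL by simp
    have hs2: "\<And>v. (\<forall>i. v i \<in> W) \<Longrightarrow> (\<forall>a\<in>set body. atom_holds R S v a) \<Longrightarrow> atom_holds R S v hd"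
      using hs bh unfolding horn_sat_def by blast
    have "atom_holds R S (I \<circ> v) hd" by (rule hs2[OF 2 1])
    then show "atom_holds R' S' v hd" using eq by simp
  qed
  have f1: "\<forall>x y z. R x y \<longrightarrow> R y z \<longrightarrow> R x z"
    and f2: "\<forall>x y z. S x y z \<longrightarrow> R x y \<and> R x z"
    and f3: "\<forall>x y. R x y \<longrightarrow> S x y y"
    and f4: "\<forall>x y z u. S x y z \<longrightarrow> S x z u \<longrightarrow> S x y u"
    and f5: "\<forall>x y z. R x y \<longrightarrow> R y z \<longrightarrow> S x y z"
    using fr unfolding IL_frame_def by blast+
  have "lab_closed L C R' S'"
    unfolding lab_closed_def
  proof (intro conjI)
    show "horn_sat L R' S' C" by (rule hs')
    show "\<forall>s n. s \<in> L \<longrightarrow> RChild s n \<in> L \<longrightarrow> R' s (RChild s n)" using a unfolding R'_def by blast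
    show "\<forall>s t u. R' s t \<longrightarrow> R' t u \<longrightarrow> R' s u" using f1 unfolding R'_def by blast
    show "\<forall>s r n. s \<in> L \<longrightarrow> r \<in> L \<longrightarrow> SChild s r n \<in> L \<longrightarrow> S' r s (SChild s r n)"
      using b unfolding S'_def by blast
    show "\<forall>s t. R' s t \<longrightarrow> S' s t t" using f3 unfolding R'_def S'_def by blast
    show "\<forall>r s t. R' r s \<longrightarrow> R' s t \<longrightarrow> S' r s t" using f5 unfolding R'_def S'_def by blast
    show "\<forall>r s t u. S' r s t \<longrightarrow> S' r t u \<longrightarrow> S' r s u" using f4 unfolding S'_def by blast
    show "\<forall>r s t. S' r s t \<longrightarrow> R' r s \<and> R' r t" using f2 unfolding R'_def S'_def by blast
  qed
  then have lc: "lab_closed L C R' S'" .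
  have "LR L C s t \<Longrightarrow> R' s t" for s t using lc unfolding LR_def by blast
  moreover have "LS L C r s t \<Longrightarrow> S' r s t" for r s t using lc unfolding LS_def by blast
  ultimately show ?thesis unfolding R'_def S'_def by blast
qed

lemma maxel:
  assumes fr: "IL_frame W R S" and P: "P y"
  shows "\<exists>z. P z \<and> (\<forall>w. R z w \<longrightarrow> \<not> P w)"
proof -
  have "\<not> (\<exists>f :: nat \<Rightarrow> 'a. \<forall>i. R (f i) (f (Suc i)))" using fr unfolding IL_frame_def by blast
  hence "wf {(b, a). R a b}" by (auto simp: wf_iff_no_infinite_down_chain)
  then have "\<exists>z\<in>Collect P. \<forall>w. (w, z) \<in> {(b, a). R a b} \<longrightarrow> w \<notin> Collect P"
    using P unfolding wf_eq_minimal by blast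
  then show ?thesis by auto
qed


lemma inv_app:
  assumes inv: "binv B"
    and l: "\<forall>p\<in>set alt. fst p \<in> lab (set B) \<or> (is_label (fst p) \<and> (\<forall>r. strict_prefix r (fst p) \<longrightarrow> r \<in> lab (set B)))"
    and f: "\<forall>p\<in>set alt. flabs (snd p) \<subseteq> lab (set B)"
  shows "binv (B @ alt)"
proof -
  have L: "\<forall>x\<in>lab (set B). is_label x \<and> (\<forall>r. strict_prefix r x \<longrightarrow> r \<in> lab (set B))"
    and F: "\<forall>p\<in>set B. flabs (snd p) \<subseteq> lab (set B)" using inv unfolding binv_def by auto
  have sub: "lab (set B) \<subseteq> lab (set (B @ alt))" unfolding lab_def by auto
  have 1: "\<forall>x\<in>lab (set (B @ alt)). is_label x \<and> (\<forall>r. strict_prefix r x \<longrightarrow> r \<in> lab (set (B @ alt)))"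
  proof
    fix x assume "x \<in> lab (set (B @ alt))"
    then consider "x \<in> lab (set B)" | p where "p \<in> set alt" "x = fst p" by (auto simp: lab_def)
    then show "is_label x \<and> (\<forall>r. strict_prefix r x \<longrightarrow> r \<in> lab (set (B @ alt)))"
    proof cases
      case 1 then show ?thesis using L sub by blast
    next
      case 2 then show ?thesis using L l sub by blast
    qed
  qed
  have 2: "\<forall>p\<in>set (B @ alt). flabs (snd p) \<subseteq> lab (set (B @ alt))" using F f sub unfolding set_append by blast
  show ?thesis unfolding binv_def using 1 2 by blast
qed

lemma inv_rule:
  assumes inv: "binv B" and aB: "a \<in> set B" and ri: "rule_inst C (lab (set B)) a alts"
    and alt: "alt \<in> set alts"
  shows "binv (B @ alt)"
proof -
  have sL: "fst a \<in> lab (set B)" using aB by (simp add: lab_def)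
  have fa: "flabs (snd a) \<subseteq> lab (set B)" using inv aB unfolding binv_def by blast
  have pre: "\<And>x. x \<in> lab (set B) \<Longrightarrow> is_label x \<and> (\<forall>r. strict_prefix r x \<longrightarrow> r \<in> lab (set B))"
    using inv unfolding binv_def by blast
  from ri show ?thesis
  proof cases
    case (dneg s A) then show ?thesis using alt sL fa by (intro inv_app[OF inv]) auto
  next
    case (imp s A B') then show ?thesis using alt sL fa by (intro inv_app[OF inv]) auto
  next
    case (nimp s A B') then show ?thesis using alt sL fa by (intro inv_app[OF inv]) auto
  next
    case (box s t A) then show ?thesis using alt sL fa LR_in[of "lab (set B)" C s t] by (intro inv_app[OF inv]) auto
  next
    case (boxl r s t A) then show ?thesis using alt sL fa LS_in[of "lab (set B)" C r s t] by (intro inv_app[OF inv]) auto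
  next
    case (rhd s t A B') then show ?thesis using alt sL fa LR_in[of "lab (set B)" C s t] by (intro inv_app[OF inv]) auto
  next
    case (nbox s n A) then show ?thesis using alt sL fa pre[of s] by (intro inv_app[OF inv]) auto
  next
    case (nboxl s r n A) then show ?thesis using alt sL fa pre[of s] by (intro inv_app[OF inv]) auto
  next
    case (nrhd s n A B') then show ?thesis using alt sL fa pre[of s] by (intro inv_app[OF inv]) auto
  qed
qed

lemma tableau_inv: "is_tableau C \<Gamma> T \<Longrightarrow> \<forall>B\<in>set T. binv B"
proof (induction rule: is_tableau.induct)
  case (init A)
  then show ?case by (simp add: binv_def lab_def)
next
  case (add T1 B T2 A)
  have "binv B" using add.IH by simp
  then have "binv (B @ [(Root, emb A)])" by (rule inv_app) auto
  then show ?case using add.IH by auto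
next
  case (rule T T')
  then obtain T1 B T2 a alts where T: "T = T1 @ [B] @ T2" and aB: "a \<in> set B"
    and ri: "rule_inst C (lab (set B)) a alts" and T': "T' = T1 @ map (\<lambda>alt. B @ alt) alts @ T2"
    unfolding rule_step_def by blast
  have iB: "binv B" using rule.IH T by simp
  have "\<forall>alt\<in>set alts. binv (B @ alt)" using inv_rule[OF iB aB ri] by blast
  then show ?case using rule.IH T T' by auto
qed


lemma sound:
  fixes B :: "lfm list"
  assumes inv: "binv B" and aB: "a \<in> set B" and ri: "rule_inst C (lab (set B)) a alts"
    and sat: "lsat TYPE('w) C (set B)"
  shows "\<exists>alt\<in>set alts. lsat TYPE('w) C (set (B @ alt))"
proof -
  obtain W R S V and I :: "label \<Rightarrow> 'w" where M: "ILX_model C W R S V"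
    and IW: "\<forall>s\<in>lab (set B). I s \<in> W"
    and LRR: "\<forall>s t. LR (lab (set B)) C s t \<longrightarrow> R (I s) (I t)"
    and LSS: "\<forall>r s t. LS (lab (set B)) C r s t \<longrightarrow> S (I r) (I s) (I t)"
    and F: "\<forall>(s, A)\<in>set B. forces R S V I (I s) A"
    using sat unfolding lsat_def by blast
  have fr: "IL_frame W R S" and hs: "horn_sat W R S C" using M unfolding ILX_model_def by auto
  have f1: "\<forall>x y z. R x y \<longrightarrow> R y z \<longrightarrow> R x z"
    and f2: "\<forall>x y z. S x y z \<longrightarrow> R x y \<and> R x z"
    and f4: "\<forall>x y z u. S x y z \<longrightarrow> S x z u \<longrightarrow> S x y u"
    and f5: "\<forall>x y z. R x y \<longrightarrow> R y z \<longrightarrow> S x y z"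
    and fW: "\<forall>x y. R x y \<longrightarrow> x \<in> W \<and> y \<in> W"
    using fr unfolding IL_frame_def by blast+
  have sL: "fst a \<in> lab (set B)" using aB by (simp add: lab_def)
  have fa: "flabs (snd a) \<subseteq> lab (set B)" using inv aB unfolding binv_def by blast
  have pre: "\<And>x. x \<in> lab (set B) \<Longrightarrow> is_label x \<and> (\<forall>r. strict_prefix r x \<longrightarrow> r \<in> lab (set B))"
    using inv unfolding binv_def by blast
  have Fa: "forces R S V I (I (fst a)) (snd a)" using F aB by (cases a) auto
  have same: "lsat TYPE('w) C (set (B @ alt))"
    if a1: "lab (set alt) \<subseteq> lab (set B)" and a2: "\<forall>p\<in>set alt. forces R S V I (I (fst p)) (snd p)"
    for alt
  proof -
    have e: "lab (set (B @ alt)) = lab (set B)" using a1 by auto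
    have "\<forall>(s, A)\<in>set (B @ alt). forces R S V I (I s) A" using F a2 by auto
    then show ?thesis unfolding lsat_def e using M IW LRR LSS by blast
  qed
  have new: "lsat TYPE('w) C (set (B @ alt))"
    if xL: "x \<notin> lab (set B)" and yW: "y \<in> W" and ne: "alt \<noteq> []"
      and pa: "\<forall>p\<in>set alt. fst p = x \<and> flabs (snd p) \<subseteq> lab (set B) \<and> forces R S V I y (snd p)"
      and cR: "\<forall>u m. x = RChild u m \<longrightarrow> u \<in> lab (set B) \<and> R (I u) y"
      and cS: "\<forall>u r m. x = SChild u r m \<longrightarrow> u \<in> lab (set B) \<and> r \<in> lab (set B) \<and> S (I r) (I u) y"
    for x y alt
  proof -
    define I' where "I' = I(x := y)"
    have agree: "\<forall>l\<in>lab (set B). I' l = I l" using xL by (auto simp: I'_def)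
    have Ix: "I' x = y" by (simp add: I'_def)
    have labalt: "lab (set alt) = {x}"
    proof -
      obtain p where "p \<in> set alt" using ne by (cases alt) auto
      then show ?thesis using pa unfolding lab_def by force
    qed
    have L': "lab (set (B @ alt)) = insert x (lab (set B))" using labalt by auto
    have IW': "\<forall>l\<in>lab (set (B @ alt)). I' l \<in> W" using IW yW agree Ix L' by auto
    have a': "\<forall>u m. u \<in> lab (set (B @ alt)) \<longrightarrow> RChild u m \<in> lab (set (B @ alt)) \<longrightarrow> R (I' u) (I' (RChild u m))"
    proof (intro allI impI)
      fix u m assume u: "u \<in> lab (set (B @ alt))" and c: "RChild u m \<in> lab (set (B @ alt))"
      show "R (I' u) (I' (RChild u m))"
      proof (cases "RChild u m = x")
        case True
        then have "u \<in> lab (set B)" "R (I u) y" using cR by auto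
        then show ?thesis using True agree Ix by auto
      next
        case False
        then have c2: "RChild u m \<in> lab (set B)" using c L' by auto
        then have uL: "u \<in> lab (set B)" using pre[OF c2] by simp
        then have "LR (lab (set B)) C u (RChild u m)" using LR_child c2 by blast
        then show ?thesis using LRR agree uL c2 by auto
      qed
    qed
    have b': "\<forall>u r m. u \<in> lab (set (B @ alt)) \<longrightarrow> r \<in> lab (set (B @ alt)) \<longrightarrow> SChild u r m \<in> lab (set (B @ alt))
        \<longrightarrow> S (I' r) (I' u) (I' (SChild u r m))"
    proof (intro allI impI)
      fix u r m assume u: "u \<in> lab (set (B @ alt))" and r: "r \<in> lab (set (B @ alt))"
        and c: "SChild u r m \<in> lab (set (B @ alt))"
      show "S (I' r) (I' u) (I' (SChild u r m))"
      proof (cases "SChild u r m = x")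
        case True
        then have "u \<in> lab (set B)" "r \<in> lab (set B)" "S (I r) (I u) y" using cS by auto
        then show ?thesis using True agree Ix by auto
      next
        case False
        then have c2: "SChild u r m \<in> lab (set B)" using c L' by auto
        have p2: "is_label (SChild u r m)" "\<forall>q. strict_prefix q (SChild u r m) \<longrightarrow> q \<in> lab (set B)"
          using pre[OF c2] by auto
        then have uL: "u \<in> lab (set B)" by simp
        have rL: "r \<in> lab (set B)" using p2 by simp
        have "LS (lab (set B)) C r u (SChild u r m)" using LS_child c2 uL rL by blast
        then show ?thesis using LSS agree uL rL c2 by auto
      qed
    qed
    have cl: "(\<forall>s t. LR (lab (set (B @ alt))) C s t \<longrightarrow> R (I' s) (I' t))
        \<and> (\<forall>r s t. LS (lab (set (B @ alt))) C r s t \<longrightarrow> S (I' r) (I' s) (I' t))"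
      by (rule closure[OF fr hs IW' a' b'])
    have FF: "\<forall>(s, A)\<in>set (B @ alt). forces R S V I' (I' s) A"
    proof (clarify)
      fix s A assume "(s, A) \<in> set (B @ alt)"
      then consider "(s, A) \<in> set B" | "(s, A) \<in> set alt" by auto
      then show "forces R S V I' (I' s) A"
      proof cases
        case 1
        then have sB: "s \<in> lab (set B)" by (force simp: lab_def)
        have "flabs A \<subseteq> lab (set B)" using inv 1 unfolding binv_def by force
        then have "forces R S V I' (I s) A = forces R S V I (I s) A"
          using agree by (intro forces_cong) auto
        then show ?thesis using F 1 agree sB by auto
      next
        case 2
        then have "fst (s, A) = x \<and> flabs (snd (s, A)) \<subseteq> lab (set B) \<and> forces R S V I y (snd (s, A))"
          using pa by blast
        then have "s = x" "flabs A \<subseteq> lab (set B)" "forces R S V I y A" by auto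
        moreover have "forces R S V I' y A = forces R S V I y A"
          using agree \<open>flabs A \<subseteq> lab (set B)\<close> by (intro forces_cong) auto
        ultimately show ?thesis using Ix by simp
      qed
    qed
    show ?thesis unfolding lsat_def using M IW' cl FF by blast
  qed
  have lab1: "lab (set [(t, A)]) \<subseteq> lab (set B)" if "t \<in> lab (set B)" for t A
    using that by (simp add: lab_def)
  have lab2: "lab (set [(t, A), (t, A')]) \<subseteq> lab (set B)" if "t \<in> lab (set B)" for t A A'
    using that by (simp add: lab_def)
  from ri show ?thesis
  proof cases
    case (dneg s A)
    have s0: "s \<in> lab (set B)" using sL dneg by simp
    have "forces R S V I (I s) A" using Fa dneg by simp
    then have "lsat TYPE('w) C (set (B @ [(s, A)]))" using same[OF lab1[OF s0]] by simp
    then show ?thesis using dneg by simp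
  next
    case (imp s A B')
    have s0: "s \<in> lab (set B)" using sL imp by simp
    show ?thesis
    proof (cases "forces R S V I (I s) A")
      case True
      then have "forces R S V I (I s) B'" using Fa imp by simp
      then have "lsat TYPE('w) C (set (B @ [(s, B')]))" using same[OF lab1[OF s0]] by simp
      then show ?thesis using imp by simp
    next
      case False
      then have "lsat TYPE('w) C (set (B @ [(s, ENeg A)]))" using same[OF lab1[OF s0]] by simp
      then show ?thesis using imp by simp
    qed
  next
    case (nimp s A B')
    have s0: "s \<in> lab (set B)" using sL nimp by simp
    have "forces R S V I (I s) A" "forces R S V I (I s) (ENeg B')" using Fa nimp by simp_all
    then have "lsat TYPE('w) C (set (B @ [(s, A), (s, ENeg B')]))" using same[OF lab2[OF s0]] by simp
    then show ?thesis using nimp by simp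
  next
    case (box s t A)
    then have tL: "t \<in> lab (set B)" and "R (I s) (I t)" using LR_in LRR by blast+
    then have "forces R S V I (I t) A" using Fa box by simp
    then have "lsat TYPE('w) C (set (B @ [(t, A)]))" using same[OF lab1[OF tL]] by simp
    then show ?thesis using box by simp
  next
    case (boxl r s t A)
    then have tL: "t \<in> lab (set B)" and "S (I r) (I s) (I t)" using LS_in LSS by blast+
    then have "forces R S V I (I t) A" using Fa boxl by simp
    then have "lsat TYPE('w) C (set (B @ [(t, A)]))" using same[OF lab1[OF tL]] by simp
    then show ?thesis using boxl by simp
  next
    case (rhd s t A B')
    then have tL: "t \<in> lab (set B)" and Rst: "R (I s) (I t)" using LR_in LRR by blast+
    show ?thesis
    proof (cases "forces R S V I (I t) A")
      case True
      then obtain z where "S (I s) (I t) z" "forces R S V I z B'" using Fa rhd Rst by auto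
      then have "forces R S V I (I t) (ENeg (EBoxL s (ENeg B')))" by auto
      then have "lsat TYPE('w) C (set (B @ [(t, ENeg (EBoxL s (ENeg B')))]))"
        using same[OF lab1[OF tL]] by simp
      then show ?thesis using rhd by simp
    next
      case False
      then have "lsat TYPE('w) C (set (B @ [(t, ENeg A)]))" using same[OF lab1[OF tL]] by simp
      then show ?thesis using rhd by simp
    qed
  next
    case (nbox s n A)
    obtain y0 where "R (I s) y0 \<and> \<not> forces R S V I y0 A" using Fa nbox by auto
    then obtain z where z: "R (I s) z \<and> \<not> forces R S V I z A"
      and zm: "\<forall>w. R z w \<longrightarrow> \<not> (R (I s) w \<and> \<not> forces R S V I w A)"
      using maxel[OF fr, of "\<lambda>z. R (I s) z \<and> \<not> forces R S V I z A"] by blast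
    have box: "forces R S V I z (EBox A)" using zm z f1 by auto
    have fA: "flabs A \<subseteq> lab (set B)" using fa nbox by simp
    have s0: "s \<in> lab (set B)" using sL nbox by simp
    have "lsat TYPE('w) C (set (B @ [(RChild s n, ENeg A), (RChild s n, EBox A)]))"
      by (rule new[of "RChild s n" z]) (use nbox z fW box fA s0 in auto)
    then show ?thesis using nbox by simp
  next
    case (nboxl s r n A)
    obtain y0 where "S (I r) (I s) y0 \<and> \<not> forces R S V I y0 A" using Fa nboxl by auto
    then obtain z where z: "S (I r) (I s) z \<and> \<not> forces R S V I z A"
      and zm: "\<forall>w. R z w \<longrightarrow> \<not> (S (I r) (I s) w \<and> \<not> forces R S V I w A)"
      using maxel[OF fr, of "\<lambda>z. S (I r) (I s) z \<and> \<not> forces R S V I z A"] by blast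
    have box: "forces R S V I z (EBox A)"
    proof (simp, intro allI impI)
      fix w assume "R z w"
      moreover have "R (I r) z" using z f2 by blast
      ultimately have "S (I r) z w" using f5 by blast
      then have "S (I r) (I s) w" using z f4 by blast
      then show "forces R S V I w A" using zm \<open>R z w\<close> by blast
    qed
    have fA: "flabs A \<subseteq> lab (set B)" using fa nboxl by simp
    have s0: "s \<in> lab (set B)" using sL nboxl by simp
    have r0: "r \<in> lab (set B)" using pre[OF s0] nboxl by simp
    have zW: "z \<in> W" using z f2 fW by blast
    have "lsat TYPE('w) C (set (B @ [(SChild s r n, ENeg A), (SChild s r n, EBox A)]))"
      by (rule new[of "SChild s r n" z]) (use nboxl z zW box fA s0 r0 in auto)
    then show ?thesis using nboxl by simp
  next
    case (nrhd s n A B')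
    let ?P = "\<lambda>z. R (I s) z \<and> forces R S V I z A \<and> (\<forall>u. S (I s) z u \<longrightarrow> \<not> forces R S V I u B')"
    obtain y0 where "?P y0" using Fa nrhd by auto
    then obtain z where z: "?P z" and zm: "\<forall>w. R z w \<longrightarrow> \<not> ?P w"
      using maxel[OF fr, of ?P] by blast
    have box: "forces R S V I z (EBox (ENeg A))"
    proof (simp, intro allI impI notI)
      fix w assume Rzw: "R z w" and wA: "forces R S V I w A"
      have Rsw: "R (I s) w" using z Rzw f1 by blast
      have "\<forall>u. S (I s) w u \<longrightarrow> \<not> forces R S V I u B'"
      proof (intro allI impI)
        fix u assume "S (I s) w u"
        moreover have "S (I s) z w" using z Rzw f5 by blast
        ultimately have "S (I s) z u" using f4 by blast
        then show "\<not> forces R S V I u B'" using z by blast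
      qed
      then show False using zm Rzw Rsw wA by blast
    qed
    have bl: "forces R S V I z (EBoxL s (ENeg B'))" using z by simp
    have fA: "flabs A \<subseteq> lab (set B)" "flabs B' \<subseteq> lab (set B)" using fa nrhd by auto
    have s0: "s \<in> lab (set B)" using sL nrhd by simp
    have "lsat TYPE('w) C (set (B @ [(RChild s n, A), (RChild s n, EBoxL s (ENeg B')),
        (RChild s n, EBox (ENeg A))]))"
      by (rule new[of "RChild s n" z]) (use nrhd z fW box bl fA s0 in auto)
    then show ?thesis using nrhd by simp
  qed
qed

theorem mainTheorem2:
  fixes X :: "fm set" and C :: "horn_clause set" and \<Gamma> :: "fm set"
    and T T' :: tableau
  assumes "horn_witness TYPE('w) X C"
    and "finite \<Gamma>"
    and "is_tableau C \<Gamma> T"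
    and "tableau_sat TYPE('w) C T"
    and "rule_step C T T'"
  shows "tableau_sat TYPE('w) C T'"
proof -
  obtain T1 B T2 a alts where T: "T = T1 @ [B] @ T2" and aB: "a \<in> set B"
    and ri: "rule_inst C (lab (set B)) a alts" and T': "T' = T1 @ map (\<lambda>alt. B @ alt) alts @ T2"
    using assms(5) unfolding rule_step_def by blast
  obtain B0 where B0: "B0 \<in> set T" and s0: "lsat TYPE('w) C (set B0)"
    using assms(4) unfolding tableau_sat_def by blast
  have iB: "binv B" using tableau_inv[OF assms(3)] T by simp
  show ?thesis
  proof (cases "B0 \<in> set T1 \<or> B0 \<in> set T2")
    case True
    then show ?thesis using s0 T' unfolding tableau_sat_def by auto
  next
    case False
    then have "B0 = B" using B0 T by auto
    then obtain alt where "alt \<in> set alts" and la: "lsat TYPE('w) C (set (B @ alt))"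
      using sound[OF iB aB ri] s0 by blast
    then have "B @ alt \<in> set T'" using T' by auto
    then show ?thesis using la unfolding tableau_sat_def by blast
  qed
qed

end
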